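(* Let $A$ be a commutative unital ring, $B$ an $A$-algebra that is finitely generated and free as an $A$-module, and $D$ a $B$-algebra. Let $\mathrm{Der}_B(D)$ be the set of all derivations $\partial$ of $D$ for which there exist a derivation $d$ of $A$ and a derivation $\delta$ of $B$ such that the structure maps are differential maps $(A,d)\to(B,\delta)$ and $(B,\delta)\to(D,\partial)$. For $\partial\in\mathrm{Der}_B(D)$ let $\partial^W$ denote the derivation of the classical Weil descent $W(D)$ given by: the unique derivation of $W(D)$ such that $(W(D),\partial^W)$ is a differential $(A,d)$-algebra and the unit $W_D:D\to W(D)\otimes_A B$ satisfies $W_D\circ\partial=(\partial^W\otimes\delta)\circ W_D$ (for any such $d,\delta$). Then $\mathrm{Der}_B(D)$ is an $A$-submodule and a Lie subring of $\mathrm{Der}(D)$ and the map $\mathrm{Der}_B(D)\to\mathrm{Der}(W(D))$, $\partial\mapsto\partial^W$, is an $A$-module and Lie ring homomorphism. Explicitly, for $\partial_1,\partial_2\in\mathrm{Der}_B(D)$: (i) $(a_1\partial_1+a_2\partial_2)^W=a_1\partial_1^W+a_2\partial_2^W$ for all $a_1,a_2\in A$; (ii) $[\partial_1,\partial_2]^W=[\partial_1^W,\partial_2^W]$; in particular $\partial_1^W,\partial_2^W$ commute if $\partial_1,\partial_2$ commute.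
   Context: All rings and algebras are commutative and unital. Classical Weil descent: for $B$ free of finite rank over $A$ and a $B$-algebra $D$, $W(D)$ is an $A$-algebra with a $B$-algebra homomorphism $W_D:D\to W(D)\otimes_A B$ such that for every $A$-algebra $C$ and every $B$-algebra homomorphism $f:D\to C\otimes_A B$ there is a unique $A$-algebra homomorphism $g:W(D)\to C$ with $(g\otimes\mathrm{id}_B)\circ W_D=f$. For a differential $(A,d)$-algebra $(C,\eta)$, $\eta\otimes\delta$ is the unique derivation of $C\otimes_A B$ making $C\to C\otimes_AB$ and $B\to C\otimes_AB$ differential. $[\partial_1,\partial_2]=\partial_1\partial_2-\partial_2\partial_1$. Elements of $A$ act on derivations of $D$ and of $W(D)$ via the structure maps. *)

theory Defs
  imports Main
begin

text \<open>All rings are commutative unital; a ring is modelled by a type of class comm_ring_1.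
  An algebra structure is a ring homomorphism (the structure map).\<close>

definition cring_hom :: "('r::comm_ring_1 \<Rightarrow> 's::comm_ring_1) \<Rightarrow> bool" where
  "cring_hom f \<longleftrightarrow> f 1 = 1 \<and> (\<forall>x y. f (x + y) = f x + f y) \<and> (\<forall>x y. f (x * y) = f x * f y)"

definition is_derivation :: "('r::comm_ring_1 \<Rightarrow> 'r) \<Rightarrow> bool" where
  "is_derivation D \<longleftrightarrow> (\<forall>x y. D (x + y) = D x + D y) \<and> (\<forall>x y. D (x * y) = x * D y + D x * y)"

definition is_differential_map :: "('r \<Rightarrow> 's) \<Rightarrow> ('r \<Rightarrow> 'r) \<Rightarrow> ('s \<Rightarrow> 's) \<Rightarrow> bool" where
  "is_differential_map f d e \<longleftrightarrow> (\<forall>x. f (d x) = e (f x))"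

text \<open>e 0, ..., e (n-1) is a basis of B as an A-module, A acting through phi.\<close>
definition free_basis :: "('a::comm_ring_1 \<Rightarrow> 'b::comm_ring_1) \<Rightarrow> nat \<Rightarrow> (nat \<Rightarrow> 'b) \<Rightarrow> bool" where
  "free_basis phi n e \<longleftrightarrow>
     (\<forall>b. \<exists>!c. (\<forall>i\<ge>n. c i = 0) \<and> b = (\<Sum>i<n. phi (c i) * e i))"

text \<open>(T, iC, iB) is the tensor product C \<otimes>_A B, where B is free over A with basis e:
  iC, iB are ring homs agreeing on A and T is a free C-module (via iC) with basis iB (e i).\<close>
definition is_tensor_product ::
  "('a::comm_ring_1 \<Rightarrow> 'b::comm_ring_1) \<Rightarrow> ('a \<Rightarrow> 'c::comm_ring_1) \<Rightarrow> nat \<Rightarrow> (nat \<Rightarrow> 'b)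
   \<Rightarrow> ('c \<Rightarrow> 't::comm_ring_1) \<Rightarrow> ('b \<Rightarrow> 't) \<Rightarrow> bool" where
  "is_tensor_product phi psi n e iC iB \<longleftrightarrow>
     cring_hom iC \<and> cring_hom iB \<and> (\<forall>a. iC (psi a) = iB (phi a)) \<and>
     (\<forall>t. \<exists>!w. (\<forall>i\<ge>n. w i = 0) \<and> t = (\<Sum>i<n. iC (w i) * iB (e i)))"

definition derB :: "('a::comm_ring_1 \<Rightarrow> 'b::comm_ring_1) \<Rightarrow> ('b \<Rightarrow> 'd::comm_ring_1) \<Rightarrow> ('d \<Rightarrow> 'd) \<Rightarrow> bool" where
  "derB phi chi D \<longleftrightarrow> is_derivation D \<and>
     (\<exists>d \<delta>. is_derivation d \<and> is_derivation \<delta> \<and>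
        is_differential_map phi d \<delta> \<and> is_differential_map chi \<delta> D)"

text \<open>X is a (the) derivation D^W of W(D): W(D) (structure map psi : A -> W) is a differential
  (A,d)-algebra and W_D o D = (X \<otimes> \<delta>) o W_D, where X \<otimes> \<delta> is the derivation E of
  T = W \<otimes>_A B making iW : W -> T and iB : B -> T differential.\<close>
definition weil_rel ::
  "('a::comm_ring_1 \<Rightarrow> 'b::comm_ring_1) \<Rightarrow> ('b \<Rightarrow> 'd::comm_ring_1) \<Rightarrow> ('a \<Rightarrow> 'w::comm_ring_1)
   \<Rightarrow> ('w \<Rightarrow> 't::comm_ring_1) \<Rightarrow> ('b \<Rightarrow> 't) \<Rightarrow> ('d \<Rightarrow> 't) \<Rightarrow> ('d \<Rightarrow> 'd) \<Rightarrow> ('w \<Rightarrow> 'w) \<Rightarrow> bool" where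
  "weil_rel phi chi psi iW iB WD D X \<longleftrightarrow> is_derivation X \<and>
     (\<exists>d \<delta>. is_derivation d \<and> is_derivation \<delta> \<and>
        is_differential_map phi d \<delta> \<and> is_differential_map chi \<delta> D \<and>
        is_differential_map psi d X \<and>
        (\<exists>E. is_derivation E \<and> is_differential_map iW X E \<and> is_differential_map iB \<delta> E \<and>
             is_differential_map WD D E))"

definition weil_der ::
  "('a::comm_ring_1 \<Rightarrow> 'b::comm_ring_1) \<Rightarrow> ('b \<Rightarrow> 'd::comm_ring_1) \<Rightarrow> ('a \<Rightarrow> 'w::comm_ring_1)
   \<Rightarrow> ('w \<Rightarrow> 't::comm_ring_1) \<Rightarrow> ('b \<Rightarrow> 't) \<Rightarrow> ('d \<Rightarrow> 't) \<Rightarrow> ('d \<Rightarrow> 'd) \<Rightarrow> ('w \<Rightarrow> 'w)" where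
  "weil_der phi chi psi iW iB WD D = (THE X. weil_rel phi chi psi iW iB WD D X)"

end

theory Submission
  imports Defs
begin

lemma hom_add: "cring_hom f \<Longrightarrow> f (x + y) = f x + f y"
  by (simp add: cring_hom_def)
lemma hom_mult: "cring_hom f \<Longrightarrow> f (x * y) = f x * f y"
  by (simp add: cring_hom_def)
lemma hom_diff: "cring_hom f \<Longrightarrow> f (x - y) = f x - f y"
proof -
  assume h: "cring_hom f"
  have "f (x - y) + f y = f x" using hom_add[OF h, of "x - y" y] by simp
  thus ?thesis by (simp add: eq_diff_eq)
qed
lemma hom_zero: "cring_hom f \<Longrightarrow> f 0 = 0"
  using hom_diff[of f 0 0] by simp

lemma der_add: "is_derivation D \<Longrightarrow> D (x + y) = D x + D y"
  by (simp add: is_derivation_def)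
lemma der_mult: "is_derivation D \<Longrightarrow> D (x * y) = x * D y + D x * y"
  by (simp add: is_derivation_def)
lemma der_diff: "is_derivation D \<Longrightarrow> D (x - y) = D x - D y"
proof -
  assume h: "is_derivation D"
  have "D (x - y) + D y = D x" using der_add[OF h, of "x - y" y] by simp
  thus ?thesis by (simp add: eq_diff_eq)
qed

lemma der_zero: "is_derivation (\<lambda>_. 0)"
  by (simp add: is_derivation_def)

lemma der_lin: "is_derivation D1 \<Longrightarrow> is_derivation D2 \<Longrightarrow>
  is_derivation (\<lambda>x. c1 * D1 x + c2 * D2 x)"
  unfolding is_derivation_def by (auto simp: algebra_simps)

lemma der_comm: assumes h1: "is_derivation D1" and h2: "is_derivation D2"
  shows "is_derivation (\<lambda>x. D1 (D2 x) - D2 (D1 x))"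
  unfolding is_derivation_def
proof (intro conjI allI)
  fix x y
  show "D1 (D2 (x + y)) - D2 (D1 (x + y)) = D1 (D2 x) - D2 (D1 x) + (D1 (D2 y) - D2 (D1 y))"
    by (simp add: der_add[OF h1] der_add[OF h2])
  show "D1 (D2 (x * y)) - D2 (D1 (x * y)) = x * (D1 (D2 y) - D2 (D1 y)) + (D1 (D2 x) - D2 (D1 x)) * y"
    by (simp add: der_add[OF h1] der_add[OF h2] der_mult[OF h1] der_mult[OF h2] algebra_simps)
qed

lemma dm_zero: "cring_hom f \<Longrightarrow> is_differential_map f (\<lambda>_. 0) (\<lambda>_. 0)"
  by (simp add: is_differential_map_def hom_zero)

lemma dm_lin: assumes h: "cring_hom f" and m1: "is_differential_map f d1 e1"
  and m2: "is_differential_map f d2 e2" and k1: "f c1 = k1" and k2: "f c2 = k2"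
  shows "is_differential_map f (\<lambda>x. c1 * d1 x + c2 * d2 x) (\<lambda>y. k1 * e1 y + k2 * e2 y)"
  using m1 m2 unfolding is_differential_map_def
  by (simp add: hom_add[OF h] hom_mult[OF h] k1[symmetric] k2[symmetric])

lemma dm_comm: assumes h: "cring_hom f" and m1: "is_differential_map f d1 e1"
  and m2: "is_differential_map f d2 e2"
  shows "is_differential_map f (\<lambda>x. d1 (d2 x) - d2 (d1 x)) (\<lambda>y. e1 (e2 y) - e2 (e1 y))"
  using m1 m2 unfolding is_differential_map_def
  by (simp add: hom_diff[OF h])

theorem theorem3p3:
  fixes phi :: "'a::comm_ring_1 \<Rightarrow> 'b::comm_ring_1"
    and chi :: "'b \<Rightarrow> 'd::comm_ring_1"
    and n :: nat and e :: "nat \<Rightarrow> 'b"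
    and psi :: "'a \<Rightarrow> 'w::comm_ring_1"
    and iW :: "'w \<Rightarrow> 't::comm_ring_1" and iB :: "'b \<Rightarrow> 't"
    and WD :: "'d \<Rightarrow> 't"
    and D1 D2 :: "'d \<Rightarrow> 'd" and a1 a2 :: 'a
  assumes "cring_hom phi" and "cring_hom chi" and "free_basis phi n e"
    and "cring_hom psi"
    and "is_tensor_product phi psi n e iW iB"
    and "cring_hom WD" and "\<forall>b. WD (chi b) = iB b"
    and well_def: "\<forall>D. derB phi chi D \<longrightarrow> (\<exists>!X. weil_rel phi chi psi iW iB WD D X)"
    and "derB phi chi D1" and "derB phi chi D2"
  shows "derB phi chi (\<lambda>_. 0)
    \<and> derB phi chi (\<lambda>x. chi (phi a1) * D1 x + chi (phi a2) * D2 x)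
    \<and> derB phi chi (\<lambda>x. D1 (D2 x) - D2 (D1 x))
    \<and> weil_der phi chi psi iW iB WD (\<lambda>x. chi (phi a1) * D1 x + chi (phi a2) * D2 x)
        = (\<lambda>w. psi a1 * weil_der phi chi psi iW iB WD D1 w + psi a2 * weil_der phi chi psi iW iB WD D2 w)
    \<and> weil_der phi chi psi iW iB WD (\<lambda>x. D1 (D2 x) - D2 (D1 x))
        = (\<lambda>w. weil_der phi chi psi iW iB WD D1 (weil_der phi chi psi iW iB WD D2 w)
              - weil_der phi chi psi iW iB WD D2 (weil_der phi chi psi iW iB WD D1 w))
    \<and> (D1 \<circ> D2 = D2 \<circ> D1 \<longrightarrow>
        weil_der phi chi psi iW iB WD D1 \<circ> weil_der phi chi psi iW iB WD D2
          = weil_der phi chi psi iW iB WD D2 \<circ> weil_der phi chi psi iW iB WD D1)"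
proof -
  note hp = assms(1) and hc = assms(2) and hs = assms(4) and tp = assms(5)
    and hWD = assms(6) and wc = assms(7)
  have hW: "cring_hom iW" and hB: "cring_hom iB" and ps: "\<And>a. iW (psi a) = iB (phi a)"
    using tp by (auto simp: is_tensor_product_def)
  have wcb: "\<And>b. WD (chi b) = iB b" using wc by blast
  define W where "W = weil_der phi chi psi iW iB WD"
  have Wrel: "weil_rel phi chi psi iW iB WD D (W D)" if "derB phi chi D" for D
    using well_def that unfolding W_def weil_der_def by (metis theI')
  have Wuniq: "W D = X" if "derB phi chi D" "weil_rel phi chi psi iW iB WD D X" for D X
    using well_def that Wrel unfolding W_def by blast
  have P0: "derB phi chi (\<lambda>_. 0)"
    unfolding derB_def using der_zero[where 'a='a] der_zero[where 'a='b] der_zero[where 'a='d] dm_zero[OF hp] dm_zero[OF hc] by blast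
  obtain d1 \<delta>1 E1 where A1: "is_derivation (W D1)" "is_derivation d1" "is_derivation \<delta>1"
     "is_differential_map phi d1 \<delta>1" "is_differential_map chi \<delta>1 D1"
     "is_differential_map psi d1 (W D1)"
     "is_derivation E1" "is_differential_map iW (W D1) E1" "is_differential_map iB \<delta>1 E1"
     "is_differential_map WD D1 E1"
    using Wrel[OF assms(9)] unfolding weil_rel_def by blast
  obtain d2 \<delta>2 E2 where A2: "is_derivation (W D2)" "is_derivation d2" "is_derivation \<delta>2"
     "is_differential_map phi d2 \<delta>2" "is_differential_map chi \<delta>2 D2"
     "is_differential_map psi d2 (W D2)"
     "is_derivation E2" "is_differential_map iW (W D2) E2" "is_differential_map iB \<delta>2 E2"
     "is_differential_map WD D2 E2"
    using Wrel[OF assms(10)] unfolding weil_rel_def by blast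
  have dD1: "is_derivation D1" and dD2: "is_derivation D2"
    using assms(9,10) by (auto simp: derB_def)
  define DL where "DL = (\<lambda>x. chi (phi a1) * D1 x + chi (phi a2) * D2 x)"
  define XL where "XL = (\<lambda>w. psi a1 * W D1 w + psi a2 * W D2 w)"
  have mpL: "is_differential_map phi (\<lambda>x. a1 * d1 x + a2 * d2 x)
      (\<lambda>y. phi a1 * \<delta>1 y + phi a2 * \<delta>2 y)"
    by (rule dm_lin[OF hp A1(4) A2(4)]) auto
  have mcL: "is_differential_map chi (\<lambda>y. phi a1 * \<delta>1 y + phi a2 * \<delta>2 y) DL"
    unfolding DL_def by (rule dm_lin[OF hc A1(5) A2(5)]) auto
  have PL: "derB phi chi DL"
    unfolding derB_def DL_def
    using der_lin[OF dD1 dD2] der_lin[OF A1(2) A2(2)] der_lin[OF A1(3) A2(3)] mpL mcL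
    unfolding DL_def by blast
  have msL: "is_differential_map psi (\<lambda>x. a1 * d1 x + a2 * d2 x) XL"
    unfolding XL_def by (rule dm_lin[OF hs A1(6) A2(6)]) auto
  have mWL: "is_differential_map iW XL (\<lambda>y. iW (psi a1) * E1 y + iW (psi a2) * E2 y)"
    unfolding XL_def by (rule dm_lin[OF hW A1(8) A2(8)]) auto
  have mBL: "is_differential_map iB (\<lambda>y. phi a1 * \<delta>1 y + phi a2 * \<delta>2 y)
      (\<lambda>y. iW (psi a1) * E1 y + iW (psi a2) * E2 y)"
    by (rule dm_lin[OF hB A1(9) A2(9)]) (auto simp: ps)
  have mDL: "is_differential_map WD DL (\<lambda>y. iW (psi a1) * E1 y + iW (psi a2) * E2 y)"
    unfolding DL_def by (rule dm_lin[OF hWD A1(10) A2(10)]) (auto simp: ps wcb)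
  have RL: "weil_rel phi chi psi iW iB WD DL XL"
    unfolding weil_rel_def
    using der_lin[OF A1(1) A2(1)] der_lin[OF A1(2) A2(2)] der_lin[OF A1(3) A2(3)]
      der_lin[OF A1(7) A2(7)] mpL mcL msL mWL mBL mDL
    unfolding XL_def by blast
  have WL: "W DL = XL" by (rule Wuniq[OF PL RL])
  define DC where "DC = (\<lambda>x. D1 (D2 x) - D2 (D1 x))"
  define XC where "XC = (\<lambda>w. W D1 (W D2 w) - W D2 (W D1 w))"
  have mpC: "is_differential_map phi (\<lambda>x. d1 (d2 x) - d2 (d1 x)) (\<lambda>y. \<delta>1 (\<delta>2 y) - \<delta>2 (\<delta>1 y))"
    by (rule dm_comm[OF hp A1(4) A2(4)])
  have mcC: "is_differential_map chi (\<lambda>y. \<delta>1 (\<delta>2 y) - \<delta>2 (\<delta>1 y)) DC"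
    unfolding DC_def by (rule dm_comm[OF hc A1(5) A2(5)])
  have PC: "derB phi chi DC"
    unfolding derB_def
    using der_comm[OF dD1 dD2] der_comm[OF A1(2) A2(2)] der_comm[OF A1(3) A2(3)] mpC mcC
    unfolding DC_def by blast
  have msC: "is_differential_map psi (\<lambda>x. d1 (d2 x) - d2 (d1 x)) XC"
    unfolding XC_def by (rule dm_comm[OF hs A1(6) A2(6)])
  have mWC: "is_differential_map iW XC (\<lambda>y. E1 (E2 y) - E2 (E1 y))"
    unfolding XC_def by (rule dm_comm[OF hW A1(8) A2(8)])
  have mBC: "is_differential_map iB (\<lambda>y. \<delta>1 (\<delta>2 y) - \<delta>2 (\<delta>1 y)) (\<lambda>y. E1 (E2 y) - E2 (E1 y))"
    by (rule dm_comm[OF hB A1(9) A2(9)])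
  have mDC: "is_differential_map WD DC (\<lambda>y. E1 (E2 y) - E2 (E1 y))"
    unfolding DC_def by (rule dm_comm[OF hWD A1(10) A2(10)])
  have RC: "weil_rel phi chi psi iW iB WD DC XC"
    unfolding weil_rel_def
    using der_comm[OF A1(1) A2(1)] der_comm[OF A1(2) A2(2)] der_comm[OF A1(3) A2(3)]
      der_comm[OF A1(7) A2(7)] mpC mcC msC mWC mBC mDC
    unfolding XC_def by blast
  have WC: "W DC = XC" by (rule Wuniq[OF PC RC])
  have R0: "weil_rel phi chi psi iW iB WD (\<lambda>_. 0) (\<lambda>_. 0)"
    unfolding weil_rel_def
    using der_zero[where 'a='a] der_zero[where 'a='b] der_zero[where 'a='d] der_zero[where 'a='w]
      der_zero[where 'a='t] dm_zero[OF hp] dm_zero[OF hc] dm_zero[OF hs] dm_zero[OF hW] dm_zero[OF hB]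
      dm_zero[OF hWD] by blast
  have W0: "W (\<lambda>_. 0) = (\<lambda>_. 0)" by (rule Wuniq[OF P0 R0])
  have last: "W D1 \<circ> W D2 = W D2 \<circ> W D1" if c: "D1 \<circ> D2 = D2 \<circ> D1"
  proof -
    have "DC = (\<lambda>_. 0)" unfolding DC_def using c by (auto simp: fun_eq_iff)
    hence "XC = (\<lambda>_. 0)" using WC W0 by simp
    thus ?thesis unfolding XC_def by (auto simp: fun_eq_iff)
  qed
  show ?thesis
    using P0 PL PC WL WC last unfolding W_def DL_def XL_def DC_def XC_def by blast
qed

end
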